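(* Let $\Lambda=\{\lambda_n,\mu_n\}_{n=1}^{\infty}$ belong to the class $ABC$, let $-\infty<\gamma<\beta<\infty$, and let $r_\Lambda=\{r_{n,k}\}$ be the unique family biorthogonal to $E_\Lambda$ in $L^2(\gamma,\beta)$ that is contained in the closed span of $E_\Lambda$ in $L^2(\gamma,\beta)$. Let $f$ be an entire function admitting a Taylor–Dirichlet series representation $f(z)=\sum_{n}\big(\sum_{k=0}^{\mu_n-1}c_{n,k}z^k\big)e^{\lambda_n z}$ valid in the whole complex plane. Then for every non-negative integer $m$, \[ f^{(m)}(z)=\sum_{n=1}^{\infty}\Big(\sum_{k=0}^{\mu_n-1}\langle f^{(m)},r_{n,k}\rangle z^k\Big)e^{\lambda_n z}\qquad\text{for all } z\in\mathbb{C}. \]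
   Context: A multiplicity sequence $\Lambda=\{\lambda_n,\mu_n\}_{n=1}^\infty$ consists of distinct nonzero complex numbers $\lambda_n$ with $|\lambda_n|\to\infty$, $|\lambda_n|\le|\lambda_{n+1}|$, and positive integers $\mu_n$. $A^0_{|z|}$ is the space of entire functions $F$ with: for every $\epsilon>0$ there is $M_\epsilon$ with $|F(z)|\le M_\epsilon e^{\epsilon|z|}$ on $\mathbb{C}$. $\Lambda$ is an interpolating variety for $A^0_{|z|}$ if for every doubly indexed complex sequence $(a_{n,k})_{n\in\mathbb{N},0\le k\le\mu_n-1}$ with $\sup_n\sum_{k}|a_{n,k}|e^{-\epsilon|\lambda_n|}<\infty$ for every $\epsilon>0$ there is $f\in A^0_{|z|}$ with $f^{(k)}(\lambda_n)/k!=a_{n,k}$ for all $n,k$. $\Lambda\in ABC$ means: (A) $\sum_n\mu_n/|\lambda_n|<\infty$; (B) $\sup_n|\arg\lambda_n|<\pi/2$; (C) $\Lambda$ is an interpolating variety for $A^0_{|z|}$. $E_\Lambda=\{e_{n,k}(x)=x^ke^{\lambda_n x}\}$. $\langle f,g\rangle=\int_\gamma^\beta f\overline g\,dx$ (functions restricted to $(\gamma,\beta)$). Biorthogonal means $\langle r_{n,k},e_{j,l}\rangle=1$ if $(j,l)=(n,k)$ and $0$ otherwise. *)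

theory Defs
  imports "HOL-Complex_Analysis.Complex_Analysis"
begin

text \<open>Multiplicity sequences are indexed from 0 instead of 1.\<close>

definition multiplicity_seq :: "(nat \<Rightarrow> complex) \<Rightarrow> (nat \<Rightarrow> nat) \<Rightarrow> bool" where
  "multiplicity_seq lam mu \<longleftrightarrow>
     inj lam \<and> (\<forall>n. lam n \<noteq> 0) \<and>
     filterlim (\<lambda>n. norm (lam n)) at_top sequentially \<and>
     (\<forall>n. norm (lam n) \<le> norm (lam (Suc n))) \<and>
     (\<forall>n. mu n \<ge> 1)"

definition A0 :: "(complex \<Rightarrow> complex) set" where
  "A0 = {F. F holomorphic_on UNIV \<and>
            (\<forall>\<epsilon>>0. \<exists>M. \<forall>z. norm (F z) \<le> M * exp (\<epsilon> * norm z))}"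

definition interpolating_variety_A0 :: "(nat \<Rightarrow> complex) \<Rightarrow> (nat \<Rightarrow> nat) \<Rightarrow> bool" where
  "interpolating_variety_A0 lam mu \<longleftrightarrow>
     (\<forall>a :: nat \<Rightarrow> nat \<Rightarrow> complex.
        (\<forall>\<epsilon>>0. bdd_above (range (\<lambda>n. (\<Sum>k<mu n. norm (a n k)) * exp (- \<epsilon> * norm (lam n)))))
        \<longrightarrow> (\<exists>F\<in>A0. \<forall>n k. k < mu n \<longrightarrow> (deriv ^^ k) F (lam n) / of_nat (fact k) = a n k))"

definition class_ABC :: "(nat \<Rightarrow> complex) \<Rightarrow> (nat \<Rightarrow> nat) \<Rightarrow> bool" where
  "class_ABC lam mu \<longleftrightarrow>
     multiplicity_seq lam mu \<and>
     summable (\<lambda>n. real (mu n) / norm (lam n)) \<and>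
     (\<exists>\<theta> < pi / 2. \<forall>n. \<bar>Arg (lam n)\<bar> \<le> \<theta>) \<and>
     interpolating_variety_A0 lam mu"

definition exp_monomial :: "(nat \<Rightarrow> complex) \<Rightarrow> nat \<Rightarrow> nat \<Rightarrow> real \<Rightarrow> complex" where
  "exp_monomial lam n k x = (complex_of_real x) ^ k * exp (lam n * complex_of_real x)"

definition L2_inner :: "real \<Rightarrow> real \<Rightarrow> (real \<Rightarrow> complex) \<Rightarrow> (real \<Rightarrow> complex) \<Rightarrow> complex" where
  "L2_inner \<gamma> \<beta> f g = integral {\<gamma>..\<beta>} (\<lambda>x. f x * cnj (g x))"

definition in_L2 :: "real \<Rightarrow> real \<Rightarrow> (real \<Rightarrow> complex) \<Rightarrow> bool" where
  "in_L2 \<gamma> \<beta> f \<longleftrightarrow> f measurable_on {\<gamma>..\<beta>} \<and> (\<lambda>x. (norm (f x))^2) integrable_on {\<gamma>..\<beta>}"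

definition in_closed_span_E :: "real \<Rightarrow> real \<Rightarrow> (nat \<Rightarrow> complex) \<Rightarrow> (nat \<Rightarrow> nat) \<Rightarrow> (real \<Rightarrow> complex) \<Rightarrow> bool" where
  "in_closed_span_E \<gamma> \<beta> lam mu g \<longleftrightarrow>
     in_L2 \<gamma> \<beta> g \<and>
     (\<forall>\<epsilon>>0. \<exists>S c. finite S \<and> S \<subseteq> {(n, k). k < mu n} \<and>
        integral {\<gamma>..\<beta>} (\<lambda>x. (norm (g x - (\<Sum>(n, k)\<in>S. c n k * exp_monomial lam n k x)))^2) < \<epsilon>)"

definition biorthogonal_to_E :: "real \<Rightarrow> real \<Rightarrow> (nat \<Rightarrow> complex) \<Rightarrow> (nat \<Rightarrow> nat) \<Rightarrow> (nat \<Rightarrow> nat \<Rightarrow> real \<Rightarrow> complex) \<Rightarrow> bool" where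
  "biorthogonal_to_E \<gamma> \<beta> lam mu r \<longleftrightarrow>
     (\<forall>n k j l. k < mu n \<longrightarrow> l < mu j \<longrightarrow>
        L2_inner \<gamma> \<beta> (r n k) (exp_monomial lam j l) = (if (j, l) = (n, k) then 1 else 0))"

end

theory Submission
  imports Defs
begin

definition polyfun :: "nat \<Rightarrow> (nat \<Rightarrow> complex) \<Rightarrow> complex \<Rightarrow> complex" where
  "polyfun N b z = (\<Sum>k<N. b k * z ^ k)"

lemma polyfun_Suc: "polyfun (Suc N) b z = polyfun N b z + b N * z ^ N"
  by (simp add: polyfun_def)

lemma polyfun_0[simp]: "polyfun 0 b z = 0"
  by (simp add: polyfun_def)

lemma polyfun_deriv:
  "(polyfun N b has_field_derivative polyfun (N - 1) (\<lambda>k. of_nat (Suc k) * b (Suc k)) z) (at z)"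
proof (induction N)
  case 0
  then show ?case by (simp add: polyfun_def[abs_def])
next
  case (Suc M)
  have e: "polyfun (Suc M) b = (\<lambda>z. polyfun M b z + b M * z ^ M)"
    by (simp add: polyfun_Suc fun_eq_iff)
  have d: "((\<lambda>z. polyfun M b z + b M * z ^ M) has_field_derivative
      polyfun (M - 1) (\<lambda>k. of_nat (Suc k) * b (Suc k)) z + b M * (of_nat M * (1 * z ^ (M - Suc 0)))) (at z)"
    by (rule DERIV_add[OF Suc DERIV_cmult[OF DERIV_power[OF DERIV_ident]]])
  have "polyfun (M - 1) (\<lambda>k. of_nat (Suc k) * b (Suc k)) z + b M * (of_nat M * (1 * z ^ (M - Suc 0)))
        = polyfun M (\<lambda>k. of_nat (Suc k) * b (Suc k)) z"
  proof (cases M)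
    case 0 then show ?thesis by simp
  next
    case (Suc K) then show ?thesis by (simp add: polyfun_Suc algebra_simps)
  qed
  then show ?case using d e by simp
qed

lemma deriv_polyfun: "deriv (polyfun N b) = polyfun (N - 1) (\<lambda>k. of_nat (Suc k) * b (Suc k))"
  using polyfun_deriv DERIV_imp_deriv by blast

lemma higher_deriv_polyfun: "\<exists>b'. (deriv ^^ j) (polyfun N b) = polyfun (N - j) b'"
proof (induction j)
  case 0 then show ?case by auto
next
  case (Suc j)
  then obtain b' where b': "(deriv ^^ j) (polyfun N b) = polyfun (N - j) b'" by blast
  have "(deriv ^^ Suc j) (polyfun N b) = deriv (polyfun (N - j) b')" using b' by simp
  also have "\<dots> = polyfun (N - j - 1) (\<lambda>k. of_nat (Suc k) * b' (Suc k))" by (rule deriv_polyfun)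
  also have "N - j - 1 = N - Suc j" by simp
  finally show ?case by blast
qed

lemma higher_deriv_polyfun_zero: "j \<ge> N \<Longrightarrow> (deriv ^^ j) (polyfun N b) z = 0"
  using higher_deriv_polyfun[of j N b] by auto

lemma polyfun_holo: "polyfun N b holomorphic_on S"
  using polyfun_deriv by (metis field_differentiable_def field_differentiable_at_within holomorphic_on_def)

lemma polyfun_taylor:
  "polyfun N b z = (\<Sum>j<N. (deriv ^^ j) (polyfun N b) w / fact j * (z - w) ^ j)"
proof -
  have "(\<lambda>j. (deriv ^^ j) (polyfun N b) w / fact j * (z - w) ^ j) sums polyfun N b z"
  proof (rule holomorphic_power_series[where r = "norm (z - w) + 1"])
    show "polyfun N b holomorphic_on ball w (norm (z - w) + 1)" by (rule polyfun_holo)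
    show "z \<in> ball w (norm (z - w) + 1)" by (simp add: dist_norm norm_minus_commute)
  qed
  moreover have "(\<lambda>j. (deriv ^^ j) (polyfun N b) w / fact j * (z - w) ^ j) sums (\<Sum>j<N. (deriv ^^ j) (polyfun N b) w / fact j * (z - w) ^ j)"
    by (rule sums_finite[where N="{..<N}"]) (simp_all add: higher_deriv_polyfun_zero)
  ultimately show ?thesis using sums_unique2 by blast
qed

definition dstep :: "complex \<Rightarrow> nat \<Rightarrow> (nat \<Rightarrow> complex) \<Rightarrow> nat \<Rightarrow> complex" where
  "dstep l N b k = l * b k + (if Suc k < N then of_nat (Suc k) * b (Suc k) else 0)"

lemma polyfun_shift:
  "polyfun (N - 1) b' z = polyfun N (\<lambda>k. if Suc k < N then b' k else 0) z"
proof (cases N)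
  case 0 then show ?thesis by simp
next
  case (Suc K)
  then show ?thesis by (simp add: polyfun_Suc polyfun_def)
qed

lemma exppoly_deriv:
  "((\<lambda>z. polyfun N b z * exp (l * z)) has_field_derivative polyfun N (dstep l N b) z * exp (l * z)) (at z)"
proof -
  have e: "((\<lambda>z. exp (l * z)) has_field_derivative exp (l * z) * l) (at z)"
    by (auto intro!: derivative_eq_intros)
  have "((\<lambda>z. polyfun N b z * exp (l * z)) has_field_derivative
      polyfun (N - 1) (\<lambda>k. of_nat (Suc k) * b (Suc k)) z * exp (l * z) + exp (l * z) * l * polyfun N b z) (at z)"
    by (rule DERIV_mult[OF polyfun_deriv e])
  moreover have "polyfun (N - 1) (\<lambda>k. of_nat (Suc k) * b (Suc k)) z * exp (l * z) + exp (l * z) * l * polyfun N b z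
     = polyfun N (dstep l N b) z * exp (l * z)"
  proof -
    have s2: "polyfun N (\<lambda>k. if Suc k < N then of_nat (Suc k) * b (Suc k) else 0) z + l * polyfun N b z
       = polyfun N (dstep l N b) z"
      unfolding polyfun_def dstep_def by (simp add: sum.distrib sum_distrib_left distrib_right mult.assoc)
    have "polyfun (N - 1) (\<lambda>k. of_nat (Suc k) * b (Suc k)) z * exp (l * z) + exp (l * z) * l * polyfun N b z
      = (polyfun (N - 1) (\<lambda>k. of_nat (Suc k) * b (Suc k)) z + l * polyfun N b z) * exp (l * z)"
      by (simp add: algebra_simps)
    also have "\<dots> = polyfun N (dstep l N b) z * exp (l * z)"
      by (simp only: polyfun_shift s2)
    finally show ?thesis .
  qed
  ultimately show ?thesis by simp
qed

lemma sector_Re: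
  assumes "\<bar>Arg l\<bar> \<le> \<theta>" "\<theta> < pi/2" "l \<noteq> 0"
  shows "cos \<theta> * norm l \<le> Re l"
proof -
  have "cos \<theta> \<le> cos \<bar>Arg l\<bar>"
    using assms by (intro cos_monotone_0_pi_le) auto
  also have "cos \<bar>Arg l\<bar> = cos (Arg l)" by (simp add: abs_if)
  also have "cos (Arg l) = Re l / norm l" using assms(3) by (rule cos_Arg)
  finally show ?thesis using assms(3) by (simp add: pos_le_divide_eq)
qed

lemma asym_bound:
  fixes x T :: real and n :: nat
  assumes "x > 0" "T \<ge> 1" "real n * (2 + 2 * ln T) \<le> x"
  shows "real n * T ^ n * exp (- 2 * x) \<le> 1 / x"
proof -
  have lnT: "ln T \<ge> 0" using assms by simp
  have a1: "real n * 2 \<le> real n * (2 + 2 * ln T)"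
    using lnT by (intro mult_left_mono) auto
  have a2: "real n * (2 * ln T) \<le> real n * (2 + 2 * ln T)"
    using lnT by (intro mult_left_mono) auto
  have n1: "real n \<le> x / 2" using assms(3) a1 by linarith
  have n2: "real n * ln T \<le> x / 2" using assms(3) a2 by linarith
  have "T ^ n = exp (real n * ln T)"
    using assms by (simp add: exp_of_nat_mult)
  also have "\<dots> \<le> exp (x / 2)" using n2 by simp
  finally have Tn: "T ^ n \<le> exp (x / 2)" .
  have e1: "x / 2 \<le> exp (x / 2)" using exp_ge_add_one_self[of "x/2"] by linarith
  have e2: "x \<le> exp x" using exp_ge_add_one_self[of x] by linarith
  have "real n * T ^ n * exp (- 2 * x) \<le> exp (x/2) * exp (x / 2) * exp (- 2 * x)"
    using n1 Tn e1 assms(2) by (intro mult_right_mono mult_mono) auto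
  also have "\<dots> = exp (- x)" by (simp flip: exp_add)
  also have "\<dots> \<le> 1 / x" using e2 assms(1) by (simp add: exp_minus field_simps)
  finally show ?thesis .
qed

lemma poly_bound:
  assumes r: "0 < r" and B: "\<And>\<zeta>. norm (\<zeta> - w) = r \<Longrightarrow> norm (polyfun N b \<zeta>) \<le> B"
  shows "norm (polyfun N b z) \<le> real N * B * (1 + norm (z - w) / r) ^ N"
proof -
  define T where "T = 1 + norm (z - w) / r"
  have T1: "T \<ge> 1" using r by (simp add: T_def)
  have B0: "B \<ge> 0"
  proof -
    obtain \<zeta> where "dist w \<zeta> = r" using vector_choose_dist[of r w] r by auto
    then have "norm (\<zeta> - w) = r" by (simp add: dist_norm norm_minus_commute)
    then show ?thesis using B[of \<zeta>] by (meson norm_ge_zero order_trans)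
  qed
  have cauchy: "norm ((deriv ^^ j) (polyfun N b) w) \<le> fact j * B / r ^ j" for j
  proof (rule Cauchy_inequality)
    show "polyfun N b holomorphic_on ball w r" by (rule polyfun_holo)
    show "continuous_on (cball w r) (polyfun N b)"
      by (rule holomorphic_on_imp_continuous_on[OF polyfun_holo])
    show "0 < r" by (rule r)
    show "norm (polyfun N b x) \<le> B" if "norm (w - x) = r" for x
      using B[of x] that by (simp add: norm_minus_commute)
  qed
  have tbound: "norm ((deriv ^^ j) (polyfun N b) w / fact j * (z - w) ^ j) \<le> B * T ^ N" if "j < N" for j
  proof -
    have "norm ((deriv ^^ j) (polyfun N b) w / fact j * (z - w) ^ j)
        = norm ((deriv ^^ j) (polyfun N b) w) / fact j * norm (z - w) ^ j"
      by (simp add: norm_mult norm_divide norm_power)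
    also have "\<dots> \<le> (fact j * B / r ^ j) / fact j * norm (z - w) ^ j"
      by (intro mult_right_mono divide_right_mono cauchy) auto
    also have "\<dots> = B * (norm (z - w) / r) ^ j" by (simp add: power_divide)
    also have "\<dots> \<le> B * T ^ j"
      using B0 r by (intro mult_left_mono power_mono) (auto simp: T_def)
    also have "\<dots> \<le> B * T ^ N"
      using B0 T1 that by (intro mult_left_mono power_increasing) auto
    finally show ?thesis .
  qed
  have "norm (polyfun N b z) = norm (\<Sum>j<N. (deriv ^^ j) (polyfun N b) w / fact j * (z - w) ^ j)"
    by (subst polyfun_taylor[of N b z w]) simp
  also have "\<dots> \<le> (\<Sum>j<N. norm ((deriv ^^ j) (polyfun N b) w / fact j * (z - w) ^ j))"
    by (rule norm_sum)
  also have "\<dots> \<le> (\<Sum>j<N. B * T ^ N)"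
    by (rule sum_mono) (use tbound in auto)
  also have "\<dots> = real N * B * T ^ N" by simp
  finally show ?thesis by (simp add: T_def)
qed

lemma exppoly_cont: "continuous_on S (\<lambda>z. polyfun N b z * exp (l * z))"
  by (metis DERIV_isCont continuous_at_imp_continuous_on exppoly_deriv)

lemma Baire_ball:
  fixes G :: "nat \<Rightarrow> complex \<Rightarrow> complex"
  assumes cont: "\<And>n. continuous_on UNIV (G n)"
    and bnd: "\<And>z. \<exists>K. \<forall>n. norm (G n z) \<le> K"
  shows "\<exists>w \<rho>0 M. \<rho>0 > 0 \<and> ball w \<rho>0 \<subseteq> ball x0 1 \<and> (\<forall>\<zeta>\<in>ball w \<rho>0. \<forall>n. norm (G n \<zeta>) \<le> M)"
proof -
  define F where "F M = {\<zeta>. \<forall>n. norm (G n \<zeta>) \<le> real M}" for M :: nat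
  define S where "S = cball x0 (1::real)"
  have clF: "closed (F M)" for M
  proof -
    have "F M = (\<Inter>n. {\<zeta>. norm (G n \<zeta>) \<le> real M})" by (auto simp: F_def)
    moreover have "closed {\<zeta>. norm (G n \<zeta>) \<le> real M}" for n
      by (intro closed_Collect_le continuous_on_norm cont continuous_on_const)
    ultimately show ?thesis by auto
  qed
  have cover: "\<exists>M. \<zeta> \<in> F M" for \<zeta>
  proof -
    obtain K where K: "\<forall>n. norm (G n \<zeta>) \<le> K" using bnd by blast
    have "\<forall>n. norm (G n \<zeta>) \<le> real (nat \<lceil>K\<rceil>)"
      using K by (meson order_trans real_nat_ceiling_ge)
    then show ?thesis unfolding F_def by blast
  qed
  have "\<exists>M. \<not> S \<subseteq> closure (S - F M)"
  proof (rule ccontr)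
    assume "\<not> ?thesis"
    then have dense: "S \<subseteq> closure (S - F M)" for M by blast
    have "S \<subseteq> closure (\<Inter> (range (\<lambda>M. S - F M)))"
    proof (rule Baire)
      show "closed S" by (simp add: S_def)
      show "countable (range (\<lambda>M. S - F M))" by simp
      fix T assume "T \<in> range (\<lambda>M. S - F M)"
      then obtain M where T: "T = S - F M" by blast
      have "openin (top_of_set S) (S \<inter> (- F M))"
        using clF by (auto simp: openin_open intro!: exI[of _ "- F M"])
      then show "openin (top_of_set S) T \<and> S \<subseteq> closure T"
        using dense[of M] T by (simp add: Diff_eq)
    qed
    moreover have "\<Inter> (range (\<lambda>M. S - F M)) = {}" using cover by blast
    moreover have "x0 \<in> S" by (simp add: S_def)
    ultimately show False by (metis closure_empty empty_iff subsetD)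
  qed
  then obtain M where M: "\<not> S \<subseteq> closure (S - F M)" by blast
  then obtain y where yS: "y \<in> S" and ycl: "y \<notin> closure (S - F M)" by blast
  have opc: "open (- closure (S - F M))" by (rule open_Compl, rule closed_closure)
  obtain e where e: "e > 0" "ball y e \<subseteq> - closure (S - F M)"
    using ycl opc by (meson ComplI open_contains_ball)
  have sub: "ball y e \<inter> S \<subseteq> F M"
  proof
    fix \<zeta> assume z: "\<zeta> \<in> ball y e \<inter> S"
    then have "\<zeta> \<notin> closure (S - F M)" using e(2) by blast
    then have "\<zeta> \<notin> S - F M" using closure_subset by blast
    then show "\<zeta> \<in> F M" using z by blast
  qed
  have "y \<in> closure (ball x0 1)" using yS by (simp add: S_def)
  then obtain w where w: "w \<in> ball x0 1" "dist w y < e"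
    using closure_approachable e(1) by blast
  have "open (ball y e \<inter> ball x0 1)" by (intro open_Int open_ball)
  moreover have "w \<in> ball y e \<inter> ball x0 1" using w by (simp add: dist_commute)
  ultimately obtain \<rho>0 where \<rho>0: "\<rho>0 > 0" "ball w \<rho>0 \<subseteq> ball y e \<inter> ball x0 1"
    by (meson open_contains_ball)
  have "\<forall>\<zeta>\<in>ball w \<rho>0. \<forall>n. norm (G n \<zeta>) \<le> real M"
  proof (intro ballI allI)
    fix \<zeta> n assume "\<zeta> \<in> ball w \<rho>0"
    then have "\<zeta> \<in> ball y e \<inter> S" using \<rho>0 by (auto simp: S_def)
    then have "\<zeta> \<in> F M" using sub by blast
    then show "norm (G n \<zeta>) \<le> real M" by (simp add: F_def)
  qed
  then show ?thesis using \<rho>0 by blast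
qed

lemma key_bound:
  fixes lam :: "nat \<Rightarrow> complex" and mu :: "nat \<Rightarrow> nat" and d :: "nat \<Rightarrow> nat \<Rightarrow> complex" and \<theta> \<rho> :: real
  assumes sect: "\<forall>n. \<bar>Arg (lam n)\<bar> \<le> \<theta>" and th: "\<theta> < pi/2"
    and nz: "\<forall>n. lam n \<noteq> 0"
    and mu1: "\<forall>n. mu n \<ge> 1"
    and summ: "summable (\<lambda>n. real (mu n) / norm (lam n))"
    and conv: "\<forall>z. (\<lambda>n. polyfun (mu n) (d n) z * exp (lam n * z)) \<longlonglongrightarrow> 0"
  shows "\<exists>h. summable h \<and> (\<forall>\<^sub>F n in sequentially. \<forall>z. norm z \<le> \<rho> \<longrightarrow>
            norm (polyfun (mu n) (d n) z * exp (lam n * z)) \<le> h n)"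
proof -
  define G where "G n z = polyfun (mu n) (d n) z * exp (lam n * z)" for n z
  define \<rho>' where "\<rho>' = max \<rho> 0"
  define \<kappa> where "\<kappa> = cos \<theta>"
  have \<theta>0: "0 \<le> \<theta>" using sect by (meson abs_ge_zero order_trans)
  have \<kappa>: "\<kappa> > 0" unfolding \<kappa>_def using \<theta>0 th by (intro cos_gt_zero_pi) auto
  have relam: "\<kappa> * norm (lam n) \<le> Re (lam n)" for n
    unfolding \<kappa>_def using sect th nz by (intro sector_Re) auto
  define x0 where "x0 = (\<rho>' + 3) / \<kappa>"
  have x0: "x0 \<ge> 0" "x0 * \<kappa> = \<rho>' + 3" using \<kappa> by (auto simp: x0_def \<rho>'_def)
  have bnd: "\<exists>K. \<forall>n. norm (G n z) \<le> K" for z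
  proof -
    have "convergent (\<lambda>n. G n z)" using conv unfolding G_def by (auto intro: convergentI)
    then have "Bseq (\<lambda>n. G n z)" by (rule convergent_imp_Bseq)
    then show ?thesis unfolding Bseq_def by blast
  qed
  have cont: "continuous_on UNIV (G n)" for n
    unfolding G_def[abs_def] by (rule exppoly_cont)
  obtain w \<rho>0 M where w: "\<rho>0 > 0" "ball w \<rho>0 \<subseteq> ball (complex_of_real x0) 1"
      "\<forall>\<zeta>\<in>ball w \<rho>0. \<forall>n. norm (G n \<zeta>) \<le> M"
    using Baire_ball[OF cont bnd, of "complex_of_real x0"] by blast
  define r where "r = \<rho>0 / 2"
  define L where "L = \<rho>' + x0 + 1"
  define T where "T = 1 + L / r"
  have r: "r > 0" using w by (simp add: r_def)
  have L0: "L \<ge> 0" using x0 by (simp add: L_def \<rho>'_def)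
  have T1: "T \<ge> 1" using r L0 by (simp add: T_def)
  have ww: "w \<in> ball w \<rho>0" using w(1) by simp
  have "norm (G 0 w) \<le> M" using w(3) ww by blast
  then have M0: "M \<ge> 0" using norm_ge_zero[of "G 0 w"] by linarith
  have "w \<in> ball (complex_of_real x0) 1" using w(2) ww by blast
  then have wx: "dist (complex_of_real x0) w < 1" by simp
  have Pb: "norm (polyfun (mu n) (d n) \<zeta>) \<le> M * exp (- (x0 * \<kappa> - 1) * norm (lam n))"
    if "norm (\<zeta> - w) = r" for n \<zeta>
  proof -
    have \<zeta>b: "\<zeta> \<in> ball w \<rho>0" using that r w(1) by (simp add: dist_norm norm_minus_commute r_def)
    then have "\<zeta> \<in> ball (complex_of_real x0) 1" using w(2) by blast
    then have "dist (complex_of_real x0) \<zeta> < 1" by simp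
    then have \<zeta>x: "norm (\<zeta> - complex_of_real x0) < 1" by (simp add: dist_norm norm_minus_commute)
    have re: "(x0 * \<kappa> - 1) * norm (lam n) \<le> Re (lam n * \<zeta>)"
    proof -
      have "lam n * \<zeta> = lam n * complex_of_real x0 + lam n * (\<zeta> - complex_of_real x0)"
        by (simp add: algebra_simps)
      then have e1: "Re (lam n * \<zeta>) = x0 * Re (lam n) + Re (lam n * (\<zeta> - complex_of_real x0))"
        by simp
      have "norm (lam n * (\<zeta> - complex_of_real x0)) \<le> norm (lam n) * 1"
        unfolding norm_mult using \<zeta>x by (intro mult_left_mono) auto
      then have e2: "- norm (lam n) \<le> Re (lam n * (\<zeta> - complex_of_real x0))"
        using abs_Re_le_cmod[of "lam n * (\<zeta> - complex_of_real x0)"] by linarith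
      have e3: "x0 * (\<kappa> * norm (lam n)) \<le> x0 * Re (lam n)"
        using relam x0(1) by (intro mult_left_mono) auto
      have e4: "(x0 * \<kappa> - 1) * norm (lam n) = x0 * (\<kappa> * norm (lam n)) - norm (lam n)"
        by (simp add: algebra_simps)
      show ?thesis using e1 e2 e3 e4 by linarith
    qed
    have "norm (G n \<zeta>) \<le> M" using w(3) \<zeta>b by blast
    then have "norm (polyfun (mu n) (d n) \<zeta>) * exp (Re (lam n * \<zeta>)) \<le> M"
      by (simp add: G_def norm_mult)
    then have "norm (polyfun (mu n) (d n) \<zeta>) \<le> M / exp (Re (lam n * \<zeta>))"
      by (simp add: pos_le_divide_eq)
    also have "\<dots> = M * exp (- Re (lam n * \<zeta>))" by (simp only: exp_minus divide_inverse)
    also have "\<dots> \<le> M * exp (- (x0 * \<kappa> - 1) * norm (lam n))"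
    proof -
      have "- Re (lam n * \<zeta>) \<le> - (x0 * \<kappa> - 1) * norm (lam n)"
        using re by (simp only: mult_minus_left neg_le_iff_le)
      then have "exp (- Re (lam n * \<zeta>)) \<le> exp (- (x0 * \<kappa> - 1) * norm (lam n))"
        by (subst exp_le_cancel_iff)
      then show ?thesis using M0 by (rule mult_left_mono)
    qed
    finally show ?thesis .
  qed
  have Gb: "norm (G n z) \<le> M * (real (mu n) * T ^ mu n * exp (-2 * norm (lam n)))"
    if "norm z \<le> \<rho>" for n z
  proof -
    have nw: "norm w \<le> x0 + 1"
    proof -
      have "norm w \<le> norm (complex_of_real x0) + norm (w - complex_of_real x0)"
        by (metis add_diff_cancel_left' norm_triangle_ineq add.commute diff_add_cancel)
      moreover have "norm (w - complex_of_real x0) < 1" using wx by (simp add: dist_norm norm_minus_commute)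
      ultimately show ?thesis using x0(1) by simp
    qed
    have wz: "norm (z - w) \<le> L"
      using norm_triangle_ineq4[of z w] that nw by (simp add: L_def \<rho>'_def)
    have "norm (polyfun (mu n) (d n) z)
        \<le> real (mu n) * (M * exp (- (x0 * \<kappa> - 1) * norm (lam n))) * (1 + norm (z - w) / r) ^ mu n"
      by (rule poly_bound[OF r Pb])
    also have "\<dots> \<le> real (mu n) * (M * exp (- (x0 * \<kappa> - 1) * norm (lam n))) * T ^ mu n"
      unfolding T_def using wz r M0 by (intro mult_left_mono power_mono) (auto simp: divide_right_mono)
    finally have P: "norm (polyfun (mu n) (d n) z) \<le> real (mu n) * (M * exp (- (x0 * \<kappa> - 1) * norm (lam n))) * T ^ mu n" .
    have E: "norm (exp (lam n * z)) \<le> exp (\<rho>' * norm (lam n))"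
    proof -
      have "Re (lam n * z) \<le> norm (lam n * z)" by (rule complex_Re_le_cmod)
      also have "\<dots> = norm (lam n) * norm z" by (simp add: norm_mult)
      also have "\<dots> \<le> norm (lam n) * \<rho>'" using that by (intro mult_left_mono) (auto simp: \<rho>'_def)
      finally show ?thesis by (simp add: mult.commute)
    qed
    have ex: "exp (- (x0 * \<kappa> - 1) * norm (lam n)) * exp (\<rho>' * norm (lam n)) = exp (-2 * norm (lam n))"
    proof -
      have "- (x0 * \<kappa> - 1) * norm (lam n) + \<rho>' * norm (lam n) = -2 * norm (lam n)"
      proof -
        have f1: "x0 * \<kappa> * norm (lam n) = \<rho>' * norm (lam n) + 3 * norm (lam n)"
          using x0(2) by (simp add: distrib_right)
        have f2: "- (x0 * \<kappa> - 1) * norm (lam n) = norm (lam n) - x0 * \<kappa> * norm (lam n)"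
          by (simp add: algebra_simps)
        show ?thesis using f1 f2 by linarith
      qed
      then show ?thesis by (simp flip: exp_add)
    qed
    have "norm (G n z) = norm (polyfun (mu n) (d n) z) * norm (exp (lam n * z))"
      by (simp add: G_def norm_mult)
    also have "\<dots> \<le> (real (mu n) * (M * exp (- (x0 * \<kappa> - 1) * norm (lam n))) * T ^ mu n) * exp (\<rho>' * norm (lam n))"
    proof -
      have nn: "0 \<le> real (mu n) * (M * exp (- (x0 * \<kappa> - 1) * norm (lam n))) * T ^ mu n"
        using M0 T1 by (intro mult_nonneg_nonneg) auto
      show ?thesis by (rule mult_mono[OF P E nn norm_ge_zero])
    qed
    also have "\<dots> = M * (real (mu n) * T ^ mu n * (exp (- (x0 * \<kappa> - 1) * norm (lam n)) * exp (\<rho>' * norm (lam n))))"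
      by (simp add: algebra_simps)
    also have "\<dots> = M * (real (mu n) * T ^ mu n * exp (-2 * norm (lam n)))"
      by (simp only: ex)
    finally show ?thesis .
  qed
  have lim: "(\<lambda>n. real (mu n) / norm (lam n)) \<longlonglongrightarrow> 0" using summ by (rule summable_LIMSEQ_zero)
  have lnT: "ln T \<ge> 0" using T1 by simp
  have c0: "0 < 2 + 2 * ln T" using lnT by simp
  have pos: "0 < 1 / (2 + 2 * ln T)" using c0 by simp
  have ev: "\<forall>\<^sub>F n in sequentially. real (mu n) / norm (lam n) < 1 / (2 + 2 * ln T)"
    by (rule order_tendstoD(2)[OF lim pos])
  show ?thesis
  proof (intro exI conjI)
    show "summable (\<lambda>n. M * (real (mu n) / norm (lam n)))" using summ by (rule summable_mult)
    show "\<forall>\<^sub>F n in sequentially. \<forall>z. norm z \<le> \<rho> \<longrightarrow>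
            norm (polyfun (mu n) (d n) z * exp (lam n * z)) \<le> M * (real (mu n) / norm (lam n))"
      using ev
    proof eventually_elim
      case (elim n)
      have ln: "norm (lam n) > 0" using nz by simp
      have "real (mu n) < norm (lam n) * (1 / (2 + 2 * ln T))"
        using elim ln by (simp add: divide_less_eq mult.commute)
      then have c: "real (mu n) * (2 + 2 * ln T) \<le> norm (lam n)"
        using c0 by (simp add: less_divide_eq less_imp_le)
      have a: "real (mu n) * T ^ mu n * exp (- 2 * norm (lam n)) \<le> 1 / norm (lam n)"
        by (rule asym_bound[OF ln T1 c])
      have b: "1 / norm (lam n) \<le> real (mu n) / norm (lam n)"
        using mu1 ln by (intro divide_right_mono) auto
      show ?case
      proof (intro allI impI)
        fix z :: complex assume z: "norm z \<le> \<rho>"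
        have "norm (polyfun (mu n) (d n) z * exp (lam n * z)) = norm (G n z)" by (simp add: G_def)
        also have "\<dots> \<le> M * (real (mu n) * T ^ mu n * exp (-2 * norm (lam n)))" by (rule Gb[OF z])
        also have "\<dots> \<le> M * (real (mu n) / norm (lam n))"
          using a b M0 by (intro mult_left_mono) auto
        finally show "norm (polyfun (mu n) (d n) z * exp (lam n * z)) \<le> M * (real (mu n) / norm (lam n))" .
      qed
    qed
  qed
qed

lemma key_bound_all:
  fixes lam :: "nat \<Rightarrow> complex" and mu :: "nat \<Rightarrow> nat" and d :: "nat \<Rightarrow> nat \<Rightarrow> complex" and \<theta> \<rho> :: real
  assumes sect: "\<forall>n. \<bar>Arg (lam n)\<bar> \<le> \<theta>" and th: "\<theta> < pi/2"
    and nz: "\<forall>n. lam n \<noteq> 0"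
    and mu1: "\<forall>n. mu n \<ge> 1"
    and summ: "summable (\<lambda>n. real (mu n) / norm (lam n))"
    and conv: "\<forall>z. (\<lambda>n. polyfun (mu n) (d n) z * exp (lam n * z)) \<longlonglongrightarrow> 0"
  shows "\<exists>h. summable h \<and> (\<forall>n z. norm z \<le> \<rho> \<longrightarrow>
            norm (polyfun (mu n) (d n) z * exp (lam n * z)) \<le> h n)"
proof -
  define G where "G n z = polyfun (mu n) (d n) z * exp (lam n * z)" for n z
  obtain h where h: "summable h" "\<forall>\<^sub>F n in sequentially. \<forall>z. norm z \<le> \<rho> \<longrightarrow> norm (G n z) \<le> h n"
    using key_bound[OF sect th nz mu1 summ conv, of \<rho>] unfolding G_def by blast
  obtain N0 where N0: "\<And>n. n \<ge> N0 \<Longrightarrow> \<forall>z. norm z \<le> \<rho> \<longrightarrow> norm (G n z) \<le> h n"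
    using h(2) unfolding eventually_sequentially by blast
  have "\<exists>B. \<forall>z\<in>cball 0 \<rho>. norm (G n z) \<le> B" for n
  proof -
    have "continuous_on (cball 0 \<rho>) (G n)" unfolding G_def[abs_def] by (rule exppoly_cont)
    then have "bounded (G n ` cball 0 \<rho>)"
      by (intro compact_imp_bounded compact_continuous_image compact_cball)
    then show ?thesis unfolding bounded_iff by blast
  qed
  then obtain B where B: "\<And>n z. z \<in> cball 0 \<rho> \<Longrightarrow> norm (G n z) \<le> B n" by metis
  define h' where "h' n = (if n < N0 then B n else h n)" for n
  have "summable h'"
  proof -
    have "eventually (\<lambda>n. h' n = h n) sequentially"
      unfolding eventually_sequentially h'_def by (intro exI[of _ N0]) auto
    then show ?thesis using h(1) summable_cong by blast
  qed
  moreover have "\<forall>n z. norm z \<le> \<rho> \<longrightarrow> norm (G n z) \<le> h' n"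
  proof (intro allI impI)
    fix n and z :: complex assume z: "norm z \<le> \<rho>"
    show "norm (G n z) \<le> h' n"
    proof (cases "n < N0")
      case True then show ?thesis using B[of z n] z by (simp add: h'_def)
    next
      case False then show ?thesis using N0[of n] z by (simp add: h'_def)
    qed
  qed
  ultimately show ?thesis unfolding G_def by blast
qed

lemma L2_absint:
  assumes "in_L2 a b g"
  shows "g absolutely_integrable_on {a..b}"
proof (rule measurable_bounded_by_integrable_imp_absolutely_integrable)
  show "g \<in> borel_measurable (lebesgue_on {a..b})"
    using assms unfolding in_L2_def by (intro measurable_on_imp_borel_measurable_lebesgue) auto
  show "{a..b} \<in> sets lebesgue" by simp
  show "(\<lambda>x. 1 + (norm (g x))^2) integrable_on {a..b}"
    using assms unfolding in_L2_def by (intro integrable_add) auto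
  show "norm (g x) \<le> 1 + (norm (g x))^2" for x
  proof -
    have "0 \<le> (norm (g x) - 1)^2" by simp
    then have "0 \<le> (norm (g x))^2 + 1 - 2 * norm (g x)" unfolding power2_diff by simp
    then show ?thesis using zero_le_power2[of "norm (g x)"] norm_ge_zero[of "g x"] by linarith
  qed
qed

lemma cont_prod_absint:
  fixes F g :: "real \<Rightarrow> complex"
  assumes cont: "continuous_on {a..b} F" and g: "g absolutely_integrable_on {a..b}"
  shows "(\<lambda>x. F x * g x) absolutely_integrable_on {a..b}"
proof (rule absolutely_integrable_bounded_measurable_product[OF bilinear_times])
  show "F \<in> borel_measurable (lebesgue_on {a..b})"
    by (rule continuous_imp_measurable_on_sets_lebesgue[OF cont]) simp
  show "{a..b} \<in> sets lebesgue" by simp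
  show "bounded (F ` {a..b})"
    by (intro compact_imp_bounded compact_continuous_image cont compact_Icc)
  show "g absolutely_integrable_on {a..b}" by (rule g)
qed

lemma cnj_absint:
  fixes g :: "real \<Rightarrow> complex"
  assumes "g absolutely_integrable_on S"
  shows "(\<lambda>x. cnj (g x)) absolutely_integrable_on S"
  using assms by (simp add: absolutely_integrable_on_def integrable_on_cnj_iff)

lemma cont_real_poly: "continuous_on S (\<lambda>x::real. polyfun N b (complex_of_real x) * exp (l * complex_of_real x))"
  by (intro continuous_on_compose2[OF exppoly_cont[of UNIV N b l]] continuous_intros) auto

lemma cont_exp_monomial: "continuous_on S (exp_monomial lam j l)"
  unfolding exp_monomial_def[abs_def] by (intro continuous_intros)

primrec Dm :: "(nat \<Rightarrow> complex) \<Rightarrow> (nat \<Rightarrow> nat) \<Rightarrow> (nat \<Rightarrow> nat \<Rightarrow> complex) \<Rightarrow> nat \<Rightarrow> nat \<Rightarrow> nat \<Rightarrow> complex" where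
  "Dm lam mu c 0 n = c n"
| "Dm lam mu c (Suc m) n = dstep (lam n) (mu n) (Dm lam mu c m n)"

lemma single_term_integral:
  assumes biorth: "biorthogonal_to_E \<gamma> \<beta> lam mu r" and rL2: "in_L2 \<gamma> \<beta> (r n k)" and k: "k < mu n"
  shows "integral {\<gamma>..\<beta>} (\<lambda>x. polyfun (mu j) b (complex_of_real x) * exp (lam j * complex_of_real x) * cnj (r n k x))
         = (if j = n then b k else 0)"
proof -
  have ra: "(\<lambda>x. cnj (r n k x)) absolutely_integrable_on {\<gamma>..\<beta>}"
    by (rule cnj_absint[OF L2_absint[OF rL2]])
  have int_l: "(\<lambda>x. exp_monomial lam j l x * cnj (r n k x)) integrable_on {\<gamma>..\<beta>}" for l
    using cont_prod_absint[OF cont_exp_monomial ra] unfolding absolutely_integrable_on_def by blast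
  have eq: "polyfun (mu j) b (complex_of_real x) * exp (lam j * complex_of_real x) * cnj (r n k x)
      = (\<Sum>l<mu j. b l * (exp_monomial lam j l x * cnj (r n k x)))" for x
    unfolding polyfun_def exp_monomial_def sum_distrib_right by (intro sum.cong refl) (simp add: mult_ac)
  have inner: "integral {\<gamma>..\<beta>} (\<lambda>x. exp_monomial lam j l x * cnj (r n k x)) = (if (j, l) = (n, k) then 1 else 0)"
    if l: "l < mu j" for l
  proof -
    have "integral {\<gamma>..\<beta>} (\<lambda>x. exp_monomial lam j l x * cnj (r n k x))
        = cnj (integral {\<gamma>..\<beta>} (\<lambda>x. r n k x * cnj (exp_monomial lam j l x)))"
      by (simp add: integral_cnj mult.commute)
    also have "\<dots> = cnj (if (j, l) = (n, k) then 1 else 0)"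
      using biorth k l unfolding biorthogonal_to_E_def L2_inner_def by simp
    finally show ?thesis by simp
  qed
  have "integral {\<gamma>..\<beta>} (\<lambda>x. polyfun (mu j) b (complex_of_real x) * exp (lam j * complex_of_real x) * cnj (r n k x))
      = integral {\<gamma>..\<beta>} (\<lambda>x. \<Sum>l<mu j. b l * (exp_monomial lam j l x * cnj (r n k x)))"
    by (simp only: eq)
  also have "\<dots> = (\<Sum>l<mu j. integral {\<gamma>..\<beta>} (\<lambda>x. b l * (exp_monomial lam j l x * cnj (r n k x))))"
    by (rule integral_sum) (auto intro: integrable_on_mult_right int_l)
  also have "\<dots> = (\<Sum>l<mu j. b l * integral {\<gamma>..\<beta>} (\<lambda>x. exp_monomial lam j l x * cnj (r n k x)))"
    by simp
  also have "\<dots> = (\<Sum>l<mu j. b l * (if (j, l) = (n, k) then 1 else 0))"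
    by (intro sum.cong refl) (simp add: inner)
  also have "\<dots> = (if j = n then b k else 0)"
  proof (cases "j = n")
    case True
    have "(\<Sum>l<mu j. b l * (if (j, l) = (n, k) then 1 else 0)) = (\<Sum>l<mu j. if l = k then b l else 0)"
      by (intro sum.cong refl) (auto simp: True)
    also have "\<dots> = b k" using k True by (simp add: sum.delta)
    finally show ?thesis using True by simp
  next
    case False then show ?thesis by simp
  qed
  finally show ?thesis .
qed

theorem corollary1p1:
  fixes lam :: "nat \<Rightarrow> complex" and mu :: "nat \<Rightarrow> nat"
    and \<gamma> \<beta> :: real
    and r :: "nat \<Rightarrow> nat \<Rightarrow> real \<Rightarrow> complex"
    and f :: "complex \<Rightarrow> complex"
    and c :: "nat \<Rightarrow> nat \<Rightarrow> complex"
  assumes ABC: "class_ABC lam mu"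
    and interval: "\<gamma> < \<beta>"
    and r_span: "\<forall>n k. k < mu n \<longrightarrow> in_closed_span_E \<gamma> \<beta> lam mu (r n k)"
    and r_biorth: "biorthogonal_to_E \<gamma> \<beta> lam mu r"
    and f_entire: "f holomorphic_on UNIV"
    and f_series: "\<forall>z. (\<lambda>n. (\<Sum>k<mu n. c n k * z ^ k) * exp (lam n * z)) sums f z"
  shows "\<forall>m::nat. \<forall>z. (\<lambda>n. (\<Sum>k<mu n. L2_inner \<gamma> \<beta> (\<lambda>x. (deriv ^^ m) f (complex_of_real x)) (r n k) * z ^ k)
                              * exp (lam n * z)) sums ((deriv ^^ m) f z)"
proof -
  have ms: "multiplicity_seq lam mu" and summ: "summable (\<lambda>n. real (mu n) / norm (lam n))"
    and sec: "\<exists>\<theta> < pi / 2. \<forall>n. \<bar>Arg (lam n)\<bar> \<le> \<theta>"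
    using ABC unfolding class_ABC_def by auto
  obtain \<theta> where th: "\<theta> < pi/2" and sect: "\<forall>n. \<bar>Arg (lam n)\<bar> \<le> \<theta>" using sec by blast
  have nz: "\<forall>n. lam n \<noteq> 0" and mu1: "\<forall>n. mu n \<ge> 1"
    using ms unfolding multiplicity_seq_def by auto
  define g where "g m n z = polyfun (mu n) (Dm lam mu c m n) z * exp (lam n * z)" for m n z
  have gder: "(g m n has_field_derivative g (Suc m) n z) (at z)" for m n z
    unfolding g_def[abs_def] using exppoly_deriv[of "mu n" "Dm lam mu c m n" "lam n" z] by simp
  have S: "\<forall>z. (\<lambda>n. g m n z) sums (deriv ^^ m) f z" for m
  proof (induction m)
    case 0
    show ?case using f_series by (simp add: g_def polyfun_def)
  next
    case (Suc m)
    have lim0: "\<forall>z. (\<lambda>n. polyfun (mu n) (Dm lam mu c m n) z * exp (lam n * z)) \<longlonglongrightarrow> 0"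
    proof
      fix z
      have "summable (\<lambda>n. g m n z)" using Suc sums_summable by blast
      then have "(\<lambda>n. g m n z) \<longlonglongrightarrow> 0" by (rule summable_LIMSEQ_zero)
      then show "(\<lambda>n. polyfun (mu n) (Dm lam mu c m n) z * exp (lam n * z)) \<longlonglongrightarrow> 0" by (simp add: g_def)
    qed
    show ?case
    proof
      fix z :: complex
      define \<rho> where "\<rho> = norm z + 1"
      obtain h where h: "summable h" "\<forall>n w. norm w \<le> \<rho> \<longrightarrow> norm (g m n w) \<le> h n"
        using key_bound_all[OF sect th nz mu1 summ lim0, of \<rho>] unfolding g_def by blast
      have ev: "\<forall>\<^sub>F n in sequentially. \<forall>x\<in>ball 0 \<rho>. norm (g m n x) \<le> h n"
        using h(2) by (intro always_eventually) auto
      have gder': "\<And>n x. x \<in> ball 0 \<rho> \<Longrightarrow> (g m n has_field_derivative g (Suc m) n x) (at x)"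
        using gder by blast
      obtain G G' where GG: "\<forall>x \<in> ball 0 \<rho>. ((\<lambda>n. g m n x) sums G x) \<and> ((\<lambda>n. g (Suc m) n x) sums G' x)
             \<and> (G has_field_derivative G' x) (at x)"
        by (rule series_and_derivative_comparison[OF open_ball h(1) gder' ev])
      have z: "z \<in> ball 0 \<rho>" by (simp add: \<rho>_def)
      have eqG: "G x = (deriv ^^ m) f x" if "x \<in> ball 0 \<rho>" for x
        using GG Suc that sums_unique2 by blast
      have "((deriv ^^ m) f has_field_derivative G' z) (at z)"
      proof (rule has_field_derivative_transform_within_open)
        show "(G has_field_derivative G' z) (at z)" using GG z by blast
        show "open (ball (0::complex) \<rho>)" by simp
        show "z \<in> ball 0 \<rho>" by (rule z)
        show "G x = (deriv ^^ m) f x" if "x \<in> ball 0 \<rho>" for x using eqG that by blast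
      qed
      then have "deriv ((deriv ^^ m) f) z = G' z" by (rule DERIV_imp_deriv)
      then show "(\<lambda>n. g (Suc m) n z) sums (deriv ^^ Suc m) f z" using GG z by simp
    qed
  qed
  have lim0: "\<forall>z. (\<lambda>n. polyfun (mu n) (Dm lam mu c m n) z * exp (lam n * z)) \<longlonglongrightarrow> 0" for m
  proof
    fix z
    have "summable (\<lambda>n. g m n z)" using S sums_summable by blast
    then have "(\<lambda>n. g m n z) \<longlonglongrightarrow> 0" by (rule summable_LIMSEQ_zero)
    then show "(\<lambda>n. polyfun (mu n) (Dm lam mu c m n) z * exp (lam n * z)) \<longlonglongrightarrow> 0" by (simp add: g_def)
  qed
  have IP: "L2_inner \<gamma> \<beta> (\<lambda>x. (deriv ^^ m) f (complex_of_real x)) (r n k) = Dm lam mu c m n k"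
    if k: "k < mu n" for m n k
  proof -
    define \<rho> where "\<rho> = max \<bar>\<gamma>\<bar> \<bar>\<beta>\<bar>"
    obtain h where h: "summable h" "\<forall>n w. norm w \<le> \<rho> \<longrightarrow> norm (g m n w) \<le> h n"
      using key_bound_all[OF sect th nz mu1 summ lim0, of \<rho>] unfolding g_def by blast
    have hx: "norm (g m j (complex_of_real x)) \<le> h j" if "x \<in> {\<gamma>..\<beta>}" for j x
      using h(2) that by (auto simp: \<rho>_def)
    have h0: "h j \<ge> 0" for j
    proof -
      have "\<gamma> \<in> {\<gamma>..\<beta>}" using interval by simp
      then have "norm (g m j (complex_of_real \<gamma>)) \<le> h j" by (rule hx)
      then show ?thesis using norm_ge_zero[of "g m j (complex_of_real \<gamma>)"] by linarith
    qed
    define H where "H = suminf h"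
    have psum: "norm (\<Sum>j<N. g m j (complex_of_real x)) \<le> H" if x: "x \<in> {\<gamma>..\<beta>}" for N x
    proof -
      have "norm (\<Sum>j<N. g m j (complex_of_real x)) \<le> (\<Sum>j<N. norm (g m j (complex_of_real x)))"
        by (rule norm_sum)
      also have "\<dots> \<le> (\<Sum>j<N. h j)" by (intro sum_mono hx x)
      also have "\<dots> \<le> H" unfolding H_def by (rule sum_le_suminf[OF h(1)]) (auto simp: h0)
      finally show ?thesis .
    qed
    have rL2: "in_L2 \<gamma> \<beta> (r n k)" using r_span k unfolding in_closed_span_E_def by blast
    have rabs: "r n k absolutely_integrable_on {\<gamma>..\<beta>}" by (rule L2_absint[OF rL2])
    have rc: "(\<lambda>x. cnj (r n k x)) absolutely_integrable_on {\<gamma>..\<beta>}" by (rule cnj_absint[OF rabs])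
    define fN where "fN N x = (\<Sum>j<N. g m j (complex_of_real x)) * cnj (r n k x)" for N x
    have contN: "continuous_on {\<gamma>..\<beta>} (\<lambda>x. \<Sum>j<N. g m j (complex_of_real x))" for N
      by (intro continuous_on_sum) (simp add: g_def cont_real_poly)
    have fN_int: "fN N integrable_on {\<gamma>..\<beta>}" for N
      using cont_prod_absint[OF contN rc] unfolding fN_def[abs_def] absolutely_integrable_on_def by blast
    have dom_int: "(\<lambda>x. H * norm (r n k x)) integrable_on {\<gamma>..\<beta>}"
      using rabs unfolding absolutely_integrable_on_def by (intro integrable_on_mult_right) blast
    have dom: "norm (fN N x) \<le> H * norm (r n k x)" if "x \<in> {\<gamma>..\<beta>}" for N x
      unfolding fN_def norm_mult complex_mod_cnj
      using psum[OF that] by (intro mult_right_mono) auto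
    have conv: "(\<lambda>N. fN N x) \<longlonglongrightarrow> (deriv ^^ m) f (complex_of_real x) * cnj (r n k x)" if "x \<in> {\<gamma>..\<beta>}" for x
    proof -
      have "(\<lambda>N. \<Sum>j<N. g m j (complex_of_real x)) \<longlonglongrightarrow> (deriv ^^ m) f (complex_of_real x)"
        using S[of m] unfolding sums_def by blast
      then show ?thesis unfolding fN_def by (rule tendsto_mult_right)
    qed
    have lim1: "(\<lambda>N. integral {\<gamma>..\<beta>} (fN N)) \<longlonglongrightarrow>
        integral {\<gamma>..\<beta>} (\<lambda>x. (deriv ^^ m) f (complex_of_real x) * cnj (r n k x))"
      by (rule dominated_convergence(2)[OF fN_int dom_int dom conv])
    have intN: "integral {\<gamma>..\<beta>} (fN N) = (\<Sum>j<N. if j = n then Dm lam mu c m n k else 0)" for N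
    proof -
      have "integral {\<gamma>..\<beta>} (fN N) = integral {\<gamma>..\<beta>} (\<lambda>x. \<Sum>j<N. g m j (complex_of_real x) * cnj (r n k x))"
        unfolding fN_def by (simp add: sum_distrib_right)
      also have "\<dots> = (\<Sum>j<N. integral {\<gamma>..\<beta>} (\<lambda>x. g m j (complex_of_real x) * cnj (r n k x)))"
      proof (rule integral_sum)
        show "finite {..<N}" by simp
        fix j
        show "(\<lambda>x. g m j (complex_of_real x) * cnj (r n k x)) integrable_on {\<gamma>..\<beta>}"
          using cont_prod_absint[OF cont_real_poly rc] unfolding g_def absolutely_integrable_on_def by blast
      qed
      also have "\<dots> = (\<Sum>j<N. if j = n then Dm lam mu c m n k else 0)"
      proof (intro sum.cong refl)
        fix j
        show "integral {\<gamma>..\<beta>} (\<lambda>x. g m j (complex_of_real x) * cnj (r n k x)) = (if j = n then Dm lam mu c m n k else 0)"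
          unfolding g_def using single_term_integral[OF r_biorth rL2 k, of j "Dm lam mu c m j"] by auto
      qed
      finally show ?thesis .
    qed
    have lim2: "(\<lambda>N. \<Sum>j<N. if j = n then Dm lam mu c m n k else 0) \<longlonglongrightarrow> Dm lam mu c m n k"
      using sums_single[of n "\<lambda>_. Dm lam mu c m n k"] unfolding sums_def by simp
    have "integral {\<gamma>..\<beta>} (\<lambda>x. (deriv ^^ m) f (complex_of_real x) * cnj (r n k x)) = Dm lam mu c m n k"
      using LIMSEQ_unique[OF lim1] lim2 intN by simp
    then show ?thesis unfolding L2_inner_def .
  qed
  show ?thesis
  proof (intro allI)
    fix m :: nat and z :: complex
    have "(\<Sum>k<mu n. L2_inner \<gamma> \<beta> (\<lambda>x. (deriv ^^ m) f (complex_of_real x)) (r n k) * z ^ k)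
          = polyfun (mu n) (Dm lam mu c m n) z" for n
      unfolding polyfun_def by (intro sum.cong refl) (simp add: IP)
    then show "(\<lambda>n. (\<Sum>k<mu n. L2_inner \<gamma> \<beta> (\<lambda>x. (deriv ^^ m) f (complex_of_real x)) (r n k) * z ^ k)
                              * exp (lam n * z)) sums ((deriv ^^ m) f z)"
      using S[of m] by (simp add: g_def)
  qed
qed

end
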